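(* For every $\lambda\in\Lambda$, $K(Q_\lambda,B)\subset B_0\sqcup B_1$, where $B_0=\{z:|z|<1\}$ and $B_1=\{z:|z-1|<1\}$.
   Context: Let $p$ be a prime, $\mathbb C_p$ with $p$-adic absolute value, $|p|=1/p$. $\Lambda=\{\lambda\in\mathbb C_p:|\lambda-1|<1\}$, $P_\lambda(z)=\frac{\lambda}{p}z^p+\left(1-\frac{\lambda}{p}\right)z^{p+1}$, $\rho=p^{-1/(p-1)}$. Fix $\hat r\in|\mathbb C_p^*|$, $\hat r>1$, $B=\{z:|z|\le\hat r\}$; $\mathcal H(B)$ is the ring of power series $\sum a_iz^i$ convergent on $B$ with norm $\|f\|_B=\sup_i|a_i|\hat r^{\,i}$. Fix $Q\in\mathcal H(B)$ with $\|Q\|_B<\rho$, $Q^*_\lambda=P_\lambda+Q$, and let $h(\lambda)$ be the unique fixed point of $Q^*_\lambda$ in $\{z:|z-1|\le|Q(1)|/p\}$. Define $Q_\lambda(z)=P_\lambda(z+h(\lambda)-1)+Q(z+h(\lambda)-1)+1-h(\lambda)$ for $z\in B$, and $K(Q_\lambda,B)=\{z\in B:Q_\lambda^n(z)\in B\ \forall n\ge0\}$. *)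

theory Defs
  imports Complex_Main "HOL-Computational_Algebra.Polynomial" "HOL-Computational_Algebra.Primes"
begin

text \<open>Abstract characterisation of (C_p, |.|): a field of characteristic 0 with a
  non-archimedean absolute value nrm, normalised by |p| = 1/p, complete, algebraically closed,
  and in which the algebraic numbers (over Q) are dense.  These properties determine C_p up to
  isometric isomorphism.\<close>

definition is_Cp :: "nat \<Rightarrow> ('a::field_char_0 \<Rightarrow> real) \<Rightarrow> bool" where
  "is_Cp p nrm \<longleftrightarrow>
     (\<forall>x. nrm x \<ge> 0) \<and> (\<forall>x. nrm x = 0 \<longleftrightarrow> x = 0) \<and>
     (\<forall>x y. nrm (x * y) = nrm x * nrm y) \<and>
     (\<forall>x y. nrm (x + y) \<le> max (nrm x) (nrm y)) \<and>
     nrm (of_nat p) = 1 / real p \<and>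
     (\<forall>X::nat \<Rightarrow> 'a. (\<forall>e>0. \<exists>N. \<forall>m\<ge>N. \<forall>n\<ge>N. nrm (X m - X n) < e)
          \<longrightarrow> (\<exists>L. (\<lambda>n. nrm (X n - L)) \<longlonglongrightarrow> 0)) \<and>
     (\<forall>q::'a poly. degree q > 0 \<longrightarrow> (\<exists>x. poly q x = 0)) \<and>
     (\<forall>x e. e > 0 \<longrightarrow> (\<exists>y. nrm (x - y) < e \<and>
          (\<exists>q::int poly. q \<noteq> 0 \<and> poly (map_poly of_int q) y = 0)))"

text \<open>Power series sum_i a_i z^i: convergence on the closed disc of radius r
  (non-archimedean: |a_i| r^i \<rightarrow> 0), Gauss norm, and evaluation.\<close>

definition ps_conv_on :: "('a::field_char_0 \<Rightarrow> real) \<Rightarrow> real \<Rightarrow> (nat \<Rightarrow> 'a) \<Rightarrow> bool" where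
  "ps_conv_on nrm r a \<longleftrightarrow> (\<lambda>i. nrm (a i) * r ^ i) \<longlonglongrightarrow> 0"

definition ps_norm :: "('a::field_char_0 \<Rightarrow> real) \<Rightarrow> real \<Rightarrow> (nat \<Rightarrow> 'a) \<Rightarrow> real" where
  "ps_norm nrm r a = (SUP i. nrm (a i) * r ^ i)"

definition ps_eval :: "('a::field_char_0 \<Rightarrow> real) \<Rightarrow> (nat \<Rightarrow> 'a) \<Rightarrow> 'a \<Rightarrow> 'a" where
  "ps_eval nrm a z = (THE s. (\<lambda>n. nrm ((\<Sum>i<n. a i * z ^ i) - s)) \<longlonglongrightarrow> 0)"

definition Pfam :: "nat \<Rightarrow> 'a::field_char_0 \<Rightarrow> 'a \<Rightarrow> 'a" where
  "Pfam p lam z = lam / of_nat p * z ^ p + (1 - lam / of_nat p) * z ^ (p + 1)"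

definition hfix :: "nat \<Rightarrow> ('a::field_char_0 \<Rightarrow> real) \<Rightarrow> (nat \<Rightarrow> 'a) \<Rightarrow> 'a \<Rightarrow> 'a" where
  "hfix p nrm a lam = (THE w. nrm (w - 1) \<le> nrm (ps_eval nrm a 1) / real p \<and>
                             Pfam p lam w + ps_eval nrm a w = w)"

definition Qconj :: "nat \<Rightarrow> ('a::field_char_0 \<Rightarrow> real) \<Rightarrow> (nat \<Rightarrow> 'a) \<Rightarrow> 'a \<Rightarrow> 'a \<Rightarrow> 'a" where
  "Qconj p nrm a lam z = (let h = hfix p nrm a lam in
      Pfam p lam (z + h - 1) + ps_eval nrm a (z + h - 1) + 1 - h)"

definition filled_set :: "('a::field_char_0 \<Rightarrow> real) \<Rightarrow> ('a \<Rightarrow> 'a) \<Rightarrow> real \<Rightarrow> 'a set" where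
  "filled_set nrm f r = {z. \<forall>n. nrm ((f ^^ n) z) \<le> r}"

end

theory Submission
  imports Defs
begin


locale nonarch =
  fixes nrm :: "'a::field_char_0 \<Rightarrow> real"
  assumes nn: "nrm x \<ge> 0" and zero_iff: "nrm x = 0 \<longleftrightarrow> x = 0"
    and mult: "nrm (x * y) = nrm x * nrm y"
    and ultra: "nrm (x + y) \<le> max (nrm x) (nrm y)"
    and complete: "\<And>X::nat \<Rightarrow> 'a. (\<forall>e>0. \<exists>N. \<forall>m\<ge>N. \<forall>n\<ge>N. nrm (X m - X n) < e)
          \<Longrightarrow> (\<exists>L. (\<lambda>n. nrm (X n - L)) \<longlonglongrightarrow> 0)"
begin

lemma one[simp]: "nrm 1 = 1"
proof -
  have "nrm 1 = nrm 1 * nrm 1" using mult[of 1 1] by simp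
  moreover have "nrm 1 \<noteq> 0" using zero_iff by simp
  ultimately show ?thesis by simp
qed

lemma zero[simp]: "nrm 0 = 0" using zero_iff by simp

lemma minus_one[simp]: "nrm (-1) = 1"
proof -
  have "nrm (-1) * nrm (-1) = 1" using mult[of "-1" "-1"] by simp
  hence "(nrm (-1) - 1) * (nrm (-1) + 1) = 0" by (simp add: algebra_simps)
  moreover have "nrm (-1) + 1 > 0" using nn[of "-1"] by simp
  ultimately show ?thesis by simp
qed

lemma minus[simp]: "nrm (- x) = nrm x"
  using mult[of "-1" x] by simp

lemma commute: "nrm (x - y) = nrm (y - x)"
  by (metis minus minus_diff_eq)

lemma ultra_diff: "nrm (x - y) \<le> max (nrm x) (nrm y)"
  using ultra[of x "-y"] by simp

lemma strict: assumes "nrm x < nrm y" shows "nrm (x + y) = nrm y"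
proof -
  have a: "nrm (x + y) \<le> nrm y" using ultra[of x y] assms by simp
  have "nrm y \<le> max (nrm (x + y)) (nrm x)" using ultra_diff[of "x + y" x] by simp
  thus ?thesis using a assms by linarith
qed

lemma strict2: assumes "nrm y < nrm x" shows "nrm (x + y) = nrm x"
  using strict[OF assms] by (simp add: add.commute)

lemma power: "nrm (x ^ n) = nrm x ^ n"
  by (induction n) (simp_all add: mult)

lemma divide: "nrm (x / y) = nrm x / nrm y"
proof (cases "y = 0")
  case True thus ?thesis by simp
next
  case False
  have "nrm (x / y) * nrm y = nrm x" using mult[of "x / y" y] False by simp
  moreover have "nrm y \<noteq> 0" using False zero_iff by simp
  ultimately show ?thesis by (simp add: field_simps)
qed

lemma of_nat_le: "nrm (of_nat n) \<le> 1"
proof (induction n)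
  case 0 thus ?case by simp
next
  case (Suc n)
  have "nrm (of_nat n + 1) \<le> max (nrm (of_nat n)) (nrm 1)" by (rule ultra)
  thus ?case using Suc by (simp add: add.commute)
qed

lemma sum_le: assumes "finite A" "\<And>i. i \<in> A \<Longrightarrow> nrm (f i) \<le> M" "0 \<le> M"
  shows "nrm (sum f A) \<le> M"
  using assms
proof (induction A rule: finite_induct)
  case empty thus ?case by simp
next
  case (insert x F)
  have "nrm (f x + sum f F) \<le> max (nrm (f x)) (nrm (sum f F))" by (rule ultra)
  moreover have "nrm (f x) \<le> M" using insert by simp
  moreover have "nrm (sum f F) \<le> M" using insert by simp
  ultimately have "nrm (f x + sum f F) \<le> M" by linarith
  thus ?case using insert by simp
qed

lemma lim_bound: assumes "(\<lambda>n. nrm (X n - s)) \<longlonglongrightarrow> 0" "\<And>n. n \<ge> N \<Longrightarrow> nrm (X n) \<le> M"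
  shows "nrm s \<le> M"
proof (rule ccontr)
  assume "\<not> ?thesis"
  hence M: "M < nrm s" by simp
  have "nrm s > 0" using M assms(2)[of N] nn[of "X N"] by linarith
  then obtain N2 where N2: "\<And>n. n \<ge> N2 \<Longrightarrow> nrm (X n - s) < nrm s"
    using assms(1) unfolding LIMSEQ_def by (metis dist_real_def diff_zero abs_of_nonneg nn)
  define n where "n = max N N2"
  have "nrm s = nrm (X n - (X n - s))" by simp
  also have "\<dots> \<le> max (nrm (X n)) (nrm (X n - s))" by (rule ultra_diff)
  also have "\<dots> < nrm s" using N2[of n] assms(2)[of n] M n_def by auto
  finally show False by simp
qed

lemma lim_unique: assumes "(\<lambda>n. nrm (X n - s)) \<longlonglongrightarrow> 0" "(\<lambda>n. nrm (X n - t)) \<longlonglongrightarrow> 0"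
  shows "s = t"
proof -
  have "nrm (s - t) \<le> e" if e: "e > 0" for e
  proof -
    obtain N where N: "\<And>n. n \<ge> N \<Longrightarrow> nrm (X n - t) < e"
      using assms(2) e unfolding LIMSEQ_def by (metis dist_real_def diff_zero abs_of_nonneg nn)
    have "(\<lambda>n. nrm ((X n - t) - (s - t))) \<longlonglongrightarrow> 0" using assms(1) by simp
    thus ?thesis using lim_bound[of "\<lambda>n. X n - t" "s - t" N e] N by fastforce
  qed
  hence "nrm (s - t) \<le> 0" by (meson dense not_le)
  thus ?thesis using nn[of "s - t"] zero_iff by simp
qed

end


lemma null_cmp: assumes "g \<longlonglongrightarrow> 0" "\<And>n. 0 \<le> f n" "\<And>n. f n \<le> g n"
  shows "f \<longlonglongrightarrow> (0::real)"
  by (rule tendsto_sandwich[of "\<lambda>_. 0" f sequentially g]) (use assms in auto)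

context nonarch begin

lemma tends0_ev: assumes "(\<lambda>n. nrm (X n)) \<longlonglongrightarrow> 0" "e > 0"
  shows "\<exists>N. \<forall>n\<ge>N. nrm (X n) < e"
  using assms unfolding LIMSEQ_def by (metis dist_real_def diff_zero abs_of_nonneg nn)

lemma cauchy_sum: assumes "(\<lambda>i. nrm (b i)) \<longlonglongrightarrow> 0"
  shows "\<exists>L. (\<lambda>n. nrm ((\<Sum>i<n. b i) - L)) \<longlonglongrightarrow> 0"
proof (rule complete, intro allI impI)
  fix e :: real assume e: "e > 0"
  obtain N where N: "\<And>i. i \<ge> N \<Longrightarrow> nrm (b i) < e / 2"
    using tends0_ev[OF assms, of "e/2"] e by auto
  have key: "nrm ((\<Sum>i<m. b i) - (\<Sum>i<n. b i)) < e" if "m \<ge> n" "n \<ge> N" for m n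
  proof -
    have "(\<Sum>i<m. b i) - (\<Sum>i<n. b i) = (\<Sum>i\<in>{n..<m}. b i)"
      using sum_diff_nat_ivl[of 0 n m b] that by (simp add: atLeast0LessThan)
    moreover have "nrm (\<Sum>i\<in>{n..<m}. b i) \<le> e / 2"
      by (rule sum_le) (use N that e in \<open>auto intro: less_imp_le\<close>)
    ultimately show ?thesis using e by simp
  qed
  show "\<exists>N. \<forall>m\<ge>N. \<forall>n\<ge>N. nrm ((\<Sum>i<m. b i) - (\<Sum>i<n. b i)) < e"
  proof (intro exI allI impI)
    fix m n assume "m \<ge> N" "n \<ge> N"
    show "nrm ((\<Sum>i<m. b i) - (\<Sum>i<n. b i)) < e"
    proof (cases "m \<ge> n")
      case True thus ?thesis using key \<open>n \<ge> N\<close> by simp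
    next
      case False
      hence "nrm ((\<Sum>i<n. b i) - (\<Sum>i<m. b i)) < e" by (intro key) (use \<open>m \<ge> N\<close> in auto)
      thus ?thesis using commute[of "\<Sum>i<n. b i" "\<Sum>i<m. b i"] by simp
    qed
  qed
qed

lemma pow_lip: assumes "nrm w \<le> 1" "nrm v \<le> 1" shows "nrm (w ^ n - v ^ n) \<le> nrm (w - v)"
proof (induction n)
  case 0 thus ?case using nn by simp
next
  case (Suc n)
  have eq: "w ^ Suc n - v ^ Suc n = w * (w ^ n - v ^ n) + (w - v) * v ^ n"
    by (simp add: algebra_simps)
  have a: "nrm (w * (w ^ n - v ^ n)) \<le> nrm (w - v)"
    using Suc assms nn by (simp add: mult) (metis mult_left_le_one_le nn order_trans)
  have b: "nrm ((w - v) * v ^ n) \<le> nrm (w - v)"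
  proof -
    have "nrm v ^ n \<le> 1" by (rule power_le_one) (use nn assms in auto)
    hence "nrm (w - v) * nrm v ^ n \<le> nrm (w - v)"
      using mult_right_le_one_le[of "nrm (w-v)" "nrm v ^ n"] nn by simp
    thus ?thesis by (simp add: mult power)
  qed
  show ?case unfolding eq using ultra[of "w * (w ^ n - v ^ n)" "(w - v) * v ^ n"] a b by linarith
qed

context
  fixes r :: real and a :: "nat \<Rightarrow> 'a"
  assumes conv: "ps_conv_on nrm r a" and r1: "r \<ge> 1"
begin

lemma ps_bdd: "bdd_above (range (\<lambda>i. nrm (a i) * r ^ i))"
proof -
  have "convergent (\<lambda>i. nrm (a i) * r ^ i)" using conv unfolding ps_conv_on_def convergent_def by blast
  hence "Bseq (\<lambda>i. nrm (a i) * r ^ i)" using convergent_imp_Bseq by blast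
  thus ?thesis by (rule Bseq_bdd_above)
qed

lemma coef_le: "nrm (a i) * r ^ i \<le> ps_norm nrm r a"
  unfolding ps_norm_def by (rule cSUP_upper[OF _ ps_bdd]) simp

lemma coef_le1: "nrm (a i) \<le> ps_norm nrm r a"
proof -
  have "nrm (a i) \<le> nrm (a i) * r ^ i" using r1 nn[of "a i"]
    by (simp add: mult_le_cancel_left1 one_le_power)
  thus ?thesis using coef_le[of i] by linarith
qed

lemma pn_nonneg: "ps_norm nrm r a \<ge> 0"
  using coef_le1[of 0] nn[of "a 0"] by linarith

lemma ps_eval_lim: assumes "nrm z \<le> r"
  shows "(\<lambda>n. nrm ((\<Sum>i<n. a i * z ^ i) - ps_eval nrm a z)) \<longlonglongrightarrow> 0"
proof -
  have t: "(\<lambda>i. nrm (a i * z ^ i)) \<longlonglongrightarrow> 0"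
  proof (rule null_cmp[of "\<lambda>i. nrm (a i) * r ^ i"])
    show "nrm (a i * z ^ i) \<le> nrm (a i) * r ^ i" for i
      using assms nn by (auto simp: mult power intro!: mult_left_mono power_mono)
    show "0 \<le> nrm (a i * z ^ i)" for i using nn .
    show "(\<lambda>i. nrm (a i) * r ^ i) \<longlonglongrightarrow> 0" using conv unfolding ps_conv_on_def .
  qed
  obtain L where L: "(\<lambda>n. nrm ((\<Sum>i<n. a i * z ^ i) - L)) \<longlonglongrightarrow> 0"
    using cauchy_sum[OF t] by blast
  have "ps_eval nrm a z = L" unfolding ps_eval_def
    by (rule the_equality, rule L, rule lim_unique, assumption, rule L)
  thus ?thesis using L by simp
qed

lemma ps_eval_bound: assumes "nrm z \<le> r" shows "nrm (ps_eval nrm a z) \<le> ps_norm nrm r a"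
proof (rule lim_bound[OF ps_eval_lim[OF assms], of 0])
  fix n :: nat
  show "nrm (\<Sum>i<n. a i * z ^ i) \<le> ps_norm nrm r a"
  proof (rule sum_le)
    fix i
    have "nrm (a i * z ^ i) \<le> nrm (a i) * r ^ i"
      using assms nn by (auto simp: mult power intro!: mult_left_mono power_mono)
    thus "nrm (a i * z ^ i) \<le> ps_norm nrm r a" using coef_le[of i] by linarith
  qed (use pn_nonneg in auto)
qed

lemma ps_eval_lip: assumes "nrm w \<le> 1" "nrm v \<le> 1"
  shows "nrm (ps_eval nrm a w - ps_eval nrm a v) \<le> ps_norm nrm r a * nrm (w - v)"
proof -
  have w: "nrm w \<le> r" and v: "nrm v \<le> r" using assms r1 by auto
  let ?X = "\<lambda>n. (\<Sum>i<n. a i * w ^ i) - (\<Sum>i<n. a i * v ^ i)"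
  have "(\<lambda>n. nrm (?X n - (ps_eval nrm a w - ps_eval nrm a v))) \<longlonglongrightarrow> 0"
  proof (rule null_cmp[of "\<lambda>n. nrm ((\<Sum>i<n. a i * w ^ i) - ps_eval nrm a w)
                                  + nrm ((\<Sum>i<n. a i * v ^ i) - ps_eval nrm a v)"])
    show "0 \<le> nrm (?X n - (ps_eval nrm a w - ps_eval nrm a v))" for n using nn .
    show "nrm (?X n - (ps_eval nrm a w - ps_eval nrm a v))
        \<le> nrm ((\<Sum>i<n. a i * w ^ i) - ps_eval nrm a w) + nrm ((\<Sum>i<n. a i * v ^ i) - ps_eval nrm a v)" for n
    proof -
      have "?X n - (ps_eval nrm a w - ps_eval nrm a v) =
         ((\<Sum>i<n. a i * w ^ i) - ps_eval nrm a w) - ((\<Sum>i<n. a i * v ^ i) - ps_eval nrm a v)"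
        by (simp add: algebra_simps)
      note E = this
      show "nrm (?X n - (ps_eval nrm a w - ps_eval nrm a v))
        \<le> nrm ((\<Sum>i<n. a i * w ^ i) - ps_eval nrm a w) + nrm ((\<Sum>i<n. a i * v ^ i) - ps_eval nrm a v)"
        unfolding E using ultra_diff[of "(\<Sum>i<n. a i * w ^ i) - ps_eval nrm a w" "(\<Sum>i<n. a i * v ^ i) - ps_eval nrm a v"]
          nn[of "(\<Sum>i<n. a i * w ^ i) - ps_eval nrm a w"] nn[of "(\<Sum>i<n. a i * v ^ i) - ps_eval nrm a v"] by linarith
    qed
    show "(\<lambda>n. nrm ((\<Sum>i<n. a i * w ^ i) - ps_eval nrm a w)
            + nrm ((\<Sum>i<n. a i * v ^ i) - ps_eval nrm a v)) \<longlonglongrightarrow> 0"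
      using tendsto_add[OF ps_eval_lim[OF w] ps_eval_lim[OF v]] by simp
  qed
  thus ?thesis
  proof (rule lim_bound[of _ _ 0])
    fix n :: nat
    have "?X n = (\<Sum>i<n. a i * (w ^ i - v ^ i))"
      by (simp add: sum_subtractf algebra_simps)
    also have "nrm \<dots> \<le> ps_norm nrm r a * nrm (w - v)"
    proof (rule sum_le)
      fix i
      have "nrm (a i * (w ^ i - v ^ i)) = nrm (a i) * nrm (w ^ i - v ^ i)" by (rule mult)
      also have "\<dots> \<le> ps_norm nrm r a * nrm (w - v)"
        using coef_le1[of i] pow_lip[OF assms, of i] nn
        by (meson mult_mono order_trans)
      finally show "nrm (a i * (w ^ i - v ^ i)) \<le> ps_norm nrm r a * nrm (w - v)" .
    qed (use pn_nonneg nn in auto)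
    finally show "nrm (?X n) \<le> ps_norm nrm r a * nrm (w - v)" .
  qed
qed

end
end


context nonarch begin
lemma pow_quad: assumes "nrm (w - 1) \<le> t" "nrm (v - 1) \<le> t" "t \<le> 1"
  shows "nrm (w ^ n - v ^ n - of_nat n * (w - v)) \<le> nrm (w - v) * t"
proof -
  have w1: "nrm w \<le> 1" using ultra[of "w - 1" 1] assms by simp
  have v1: "nrm v \<le> 1" using ultra[of "v - 1" 1] assms by simp
  have t0: "t \<ge> 0" using assms(1) nn[of "w - 1"] by linarith
  show ?thesis
  proof (induction n)
    case 0 thus ?case using nn t0 by simp
  next
    case (Suc n)
    have eq: "w ^ Suc n - v ^ Suc n - of_nat (Suc n) * (w - v) =
      w * (w ^ n - v ^ n - of_nat n * (w - v)) + (of_nat n * (w - v) * (w - 1) + (w - v) * (v ^ n - 1))"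
      by (simp add: algebra_simps)
    have a: "nrm (w * (w ^ n - v ^ n - of_nat n * (w - v))) \<le> nrm (w - v) * t"
      using Suc w1 nn by (simp add: mult) (metis mult_left_le_one_le nn order_trans)
    have b: "nrm (of_nat n * (w - v) * (w - 1)) \<le> nrm (w - v) * t"
    proof -
      have "nrm (of_nat n * (w - v) * (w - 1)) = nrm (of_nat n :: 'a) * (nrm (w - v) * nrm (w - 1))"
        by (simp add: mult)
      also have "\<dots> \<le> 1 * (nrm (w - v) * t)"
        by (rule mult_mono) (use of_nat_le assms nn in \<open>auto intro: mult_left_mono\<close>)
      finally show ?thesis by simp
    qed
    have c: "nrm ((w - v) * (v ^ n - 1)) \<le> nrm (w - v) * t"
    proof -
      have "nrm (v ^ n - 1 ^ n) \<le> nrm (v - 1)" by (rule pow_lip) (use v1 in auto)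
      hence "nrm (v ^ n - 1) \<le> t" using assms by simp
      thus ?thesis by (simp add: mult mult_left_mono nn)
    qed
    show ?case unfolding eq
      using ultra[of "w * (w ^ n - v ^ n - of_nat n * (w - v))" "of_nat n * (w - v) * (w - 1) + (w - v) * (v ^ n - 1)"]
        ultra[of "of_nat n * (w - v) * (w - 1)" "(w - v) * (v ^ n - 1)"] a b c by linarith
  qed
qed
end

lemma E1_gen: fixes c :: "'a::field" assumes "c \<noteq> 0"
  shows "(w - (Pw + Qw - w) / c) - (v - (Pv + Qv - v) / c) = - ((Pw - Pv - (1 + c) * (w - v)) + (Qw - Qv)) / c"
  using assms by (simp add: field_simps)

lemma E2_gen: fixes mu :: "'a::comm_ring_1"
  shows "(mu * w ^ p + (1 - mu) * w ^ (p + 1)) - (mu * v ^ p + (1 - mu) * v ^ (p + 1)) - (1 + (n - mu)) * (w - v) =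
   mu * (w ^ p - v ^ p - n * (w - v)) + (1 - mu) * (w ^ (p + 1) - v ^ (p + 1) - (n + 1) * (w - v))"
  by (simp add: algebra_simps)

locale pset = nonarch nrm for nrm :: "'a::field_char_0 \<Rightarrow> real" +
  fixes p :: nat and rhat :: real and a :: "nat \<Rightarrow> 'a" and lam :: 'a
  assumes p2: "p \<ge> 2" and nrm_p: "nrm (of_nat p) = 1 / real p"
    and conv: "ps_conv_on nrm rhat a" and r1: "rhat > 1"
    and K1: "ps_norm nrm rhat a < 1" and lam: "nrm (lam - 1) < 1"
begin

abbreviation "K \<equiv> ps_norm nrm rhat a"
abbreviation "Q \<equiv> ps_eval nrm a"
abbreviation "c \<equiv> of_nat p - lam / of_nat p"
abbreviation "F \<equiv> \<lambda>w. Pfam p lam w + Q w"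
abbreviation "T \<equiv> \<lambda>w. w - (F w - w) / c"
abbreviation "s \<equiv> nrm (Q 1) / real p"
abbreviation "k \<equiv> max s (K / real p)"

lemma pne: "(of_nat p :: 'a) \<noteq> 0" using p2 by simp

lemma nrm_lam: "nrm lam = 1"
  using strict[of "lam - 1" 1] lam by simp

lemma nrm_lp: "nrm (lam / of_nat p) = real p"
  using nrm_lam nrm_p p2 by (simp add: divide)

lemma nrm_1lp: "nrm (1 - lam / of_nat p) = real p"
proof -
  have "nrm (1 + - (lam / of_nat p)) = nrm (- (lam / of_nat p))"
    by (rule strict) (use nrm_lp p2 in simp)
  thus ?thesis using nrm_lp by simp
qed

lemma nrm_c: "nrm c = real p"
proof -
  have "nrm (of_nat p + - (lam / of_nat p)) = nrm (- (lam / of_nat p))"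
  proof (rule strict)
    have "1 / real p \<le> 1" using p2 by simp
    moreover have "real p \<ge> 2" using p2 by simp
    ultimately have "1 / real p < real p" by linarith
    thus "nrm (of_nat p) < nrm (- (lam / of_nat p))" using nrm_lp nrm_p by simp
  qed
  thus ?thesis using nrm_lp by simp
qed

lemma cne: "c \<noteq> 0" using nrm_c p2 zero by force

lemma K0: "K \<ge> 0" using pn_nonneg[OF conv] r1 by simp

lemma s_le: "s \<le> K / real p"
  using ps_eval_bound[OF conv, of 1] r1 p2 by (simp add: divide_right_mono)

lemma s0: "s \<ge> 0" using nn p2 by simp

lemma k1: "k < 1"
proof -
  have "K / real p < 1" using K1 p2 K0 by (simp add: field_simps)
  thus ?thesis using s_le by simp
qed

lemma s1: "s < 1" using s_le k1 by simp

lemma Pfam1: "Pfam p lam 1 = 1" unfolding Pfam_def by simp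

lemma E1: "T w - T v = - ((Pfam p lam w - Pfam p lam v - (1 + c) * (w - v)) + (Q w - Q v)) / c"
  by (rule E1_gen[OF cne])

lemma E2: "Pfam p lam w - Pfam p lam v - (1 + c) * (w - v) =
   (lam / of_nat p) * (w ^ p - v ^ p - of_nat p * (w - v)) +
   (1 - lam / of_nat p) * (w ^ (p + 1) - v ^ (p + 1) - of_nat (p + 1) * (w - v))"
  unfolding Pfam_def using E2_gen[of "lam / of_nat p" w p v "of_nat p"] by simp

end


context pset begin

lemma tri: "nrm (x - z) \<le> max (nrm (x - y)) (nrm (y - z))"
  using ultra[of "x - y" "y - z"] by simp

lemma inD_le1: "nrm (w - 1) \<le> s \<Longrightarrow> nrm w \<le> 1"
  using ultra[of "w - 1" 1] s1 by simp

lemma Tlip: assumes "nrm (w - 1) \<le> s" "nrm (v - 1) \<le> s"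
  shows "nrm (T w - T v) \<le> k * nrm (w - v)"
proof -
  let ?d = "nrm (w - v)"
  have d0: "?d \<ge> 0" using nn .
  have q1: "nrm (w ^ p - v ^ p - of_nat p * (w - v)) \<le> ?d * s"
    by (rule pow_quad) (use assms s1 in auto)
  have q2: "nrm (w ^ (p + 1) - v ^ (p + 1) - of_nat (p + 1) * (w - v)) \<le> ?d * s"
    by (rule pow_quad) (use assms s1 in auto)
  have t1: "nrm ((lam / of_nat p) * (w ^ p - v ^ p - of_nat p * (w - v))) \<le> real p * (?d * s)"
    unfolding mult nrm_lp by (rule mult_left_mono[OF q1]) simp
  have t2: "nrm ((1 - lam / of_nat p) * (w ^ (p + 1) - v ^ (p + 1) - of_nat (p + 1) * (w - v))) \<le> real p * (?d * s)"
    unfolding mult nrm_1lp by (rule mult_left_mono[OF q2]) simp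
  have t3: "nrm (Q w - Q v) \<le> K * ?d"
    by (rule ps_eval_lip[OF conv]) (use r1 inD_le1 assms in auto)
  have pk1: "real p * (?d * s) \<le> real p * (k * ?d)"
  proof -
    have "?d * s \<le> ?d * k" using d0 by (intro mult_left_mono) auto
    thus ?thesis by (metis mult.commute mult_left_mono of_nat_0_le_iff)
  qed
  have pk2: "K * ?d \<le> real p * (k * ?d)"
  proof -
    have "K = real p * (K / real p)" using p2 by simp
    also have "\<dots> \<le> real p * k" by (intro mult_left_mono) auto
    finally have "K \<le> real p * k" .
    thus ?thesis using d0 by (metis mult.assoc mult_right_mono)
  qed
  have X: "nrm ((Pfam p lam w - Pfam p lam v - (1 + c) * (w - v)) + (Q w - Q v)) \<le> real p * (k * ?d)"
    unfolding E2 using ultra[of "(lam / of_nat p) * (w ^ p - v ^ p - of_nat p * (w - v)) +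
      (1 - lam / of_nat p) * (w ^ (p + 1) - v ^ (p + 1) - of_nat (p + 1) * (w - v))" "Q w - Q v"]
      ultra[of "(lam / of_nat p) * (w ^ p - v ^ p - of_nat p * (w - v))"
      "(1 - lam / of_nat p) * (w ^ (p + 1) - v ^ (p + 1) - of_nat (p + 1) * (w - v))"]
      t1 t2 t3 pk1 pk2 by linarith
  have "nrm (T w - T v) = nrm ((Pfam p lam w - Pfam p lam v - (1 + c) * (w - v)) + (Q w - Q v)) / real p"
    unfolding E1 by (simp only: divide nrm_c minus)
  also have "\<dots> \<le> k * ?d" using X p2 by (simp add: field_simps)
  finally show ?thesis .
qed

lemma k0: "k \<ge> 0" using s0 by simp

lemma T1: "nrm (T 1 - 1) = s"
proof -
  have f: "F 1 - 1 = Q 1" using Pfam1 by simp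
  have e: "T 1 - 1 = - ((F 1 - 1) / c)" by simp
  have "nrm (T 1 - 1) = nrm (F 1 - 1) / nrm c" by (simp only: e minus divide)
  thus ?thesis by (simp only: f nrm_c)
qed

lemma Tmaps: assumes "nrm (w - 1) \<le> s" shows "nrm (T w - 1) \<le> s"
proof -
  have "nrm (T w - T 1) \<le> k * nrm (w - 1)" by (rule Tlip) (use assms s0 in auto)
  also have "\<dots> \<le> s" using assms k1 k0 nn[of "w - 1"]
    by (metis mult_le_one mult.commute mult_left_le_one_le order.strict_implies_order order_trans)
  finally have a: "nrm (T w - T 1) \<le> s" .
  show ?thesis using tri[of "T w" 1 "T 1"] a T1 by linarith
qed

end


context pset begin

lemma fix_iff: "F w = w \<longleftrightarrow> T w = w"
  using cne by auto

lemma hfix_D: "nrm (hfix p nrm a lam - 1) \<le> s"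
proof -
  define x where "x n = (T ^^ n) 1" for n
  have xS: "x (Suc n) = T (x n)" for n unfolding x_def by simp
  have xD: "nrm (x n - 1) \<le> s" for n
  proof (induction n)
    case 0 thus ?case using s0 by (simp add: x_def)
  next
    case (Suc n) thus ?case unfolding xS by (rule Tmaps)
  qed
  have step: "nrm (x (Suc n) - x n) \<le> k ^ n * s" for n
  proof (induction n)
    case 0 thus ?case using T1 by (simp add: x_def)
  next
    case (Suc n)
    have eq: "x (Suc (Suc n)) - x (Suc n) = T (x (Suc n)) - T (x n)" by (simp only: xS)
    have "nrm (x (Suc (Suc n)) - x (Suc n)) \<le> k * nrm (x (Suc n) - x n)"
      unfolding eq by (rule Tlip[OF xD xD])
    also have "\<dots> \<le> k * (k ^ n * s)" by (rule mult_left_mono[OF Suc k0])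
    finally show ?case by simp
  qed
  have far: "nrm (x m - x n) \<le> k ^ n * s" if "n \<le> m" for m n
    using that
  proof (induction m rule: dec_induct)
    case base
    have "0 \<le> k ^ n * s" by (rule mult_nonneg_nonneg[OF zero_le_power[OF k0] s0])
    thus ?case by (simp only: diff_self zero)
  next
    case (step m)
    have "k ^ m * s \<le> k ^ n * s"
      by (rule mult_right_mono[OF power_decreasing]) (use step k0 k1 s0 in auto)
    thus ?case using tri[of "x (Suc m)" "x n" "x m"] \<open>nrm (x (Suc m) - x m) \<le> k ^ m * s\<close> step.IH
      by linarith
  qed
  have lim0: "(\<lambda>n. k ^ n * s) \<longlonglongrightarrow> 0"
    by (rule tendsto_mult_left_zero, rule LIMSEQ_power_zero) (use k0 k1 in simp)
  have "\<exists>L. (\<lambda>n. nrm (x n - L)) \<longlonglongrightarrow> 0"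
  proof (rule complete, intro allI impI)
    fix e :: real assume e: "e > 0"
    obtain N where N: "\<And>n. n \<ge> N \<Longrightarrow> k ^ n * s < e"
      using lim0 e unfolding lim_sequentially dist_real_def
      by (metis abs_of_nonneg diff_zero k0 s0 zero_le_mult_iff zero_le_power)
    show "\<exists>N. \<forall>m\<ge>N. \<forall>n\<ge>N. nrm (x m - x n) < e"
    proof (intro exI allI impI)
      fix m n assume mn: "m \<ge> N" "n \<ge> N"
      show "nrm (x m - x n) < e"
      proof (cases "n \<le> m")
        case True thus ?thesis using far[OF True] N[OF mn(2)] by linarith
      next
        case False thus ?thesis using far[of m n] N[OF mn(1)] commute[of "x m" "x n"] by simp
      qed
    qed
  qed
  then obtain h0 where h0: "(\<lambda>n. nrm (x n - h0)) \<longlonglongrightarrow> 0" by blast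
  have h0D: "nrm (h0 - 1) \<le> s"
    by (rule lim_bound[of "\<lambda>n. x n - 1" _ 0]) (use h0 xD in simp_all)
  have fixT: "T h0 = h0"
  proof (rule lim_unique[of "\<lambda>n. x (Suc n)"])
    show "(\<lambda>n. nrm (x (Suc n) - T h0)) \<longlonglongrightarrow> 0"
    proof (rule null_cmp[of "\<lambda>n. k * nrm (x n - h0)"])
      show "(\<lambda>n. k * nrm (x n - h0)) \<longlonglongrightarrow> 0" using tendsto_mult_right_zero[OF h0] by simp
      show "0 \<le> nrm (x (Suc n) - T h0)" for n by (rule nn)
      show "nrm (x (Suc n) - T h0) \<le> k * nrm (x n - h0)" for n
        unfolding xS by (rule Tlip) (use xD h0D in auto)
    qed
    show "(\<lambda>n. nrm (x (Suc n) - h0)) \<longlonglongrightarrow> 0" using LIMSEQ_Suc[OF h0] .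
  qed
  have uniq: "w = h0" if "nrm (w - 1) \<le> s" "F w = w" for w
  proof -
    have Tw: "T w = w" using that fix_iff by blast
    have "nrm (T w - T h0) \<le> k * nrm (w - h0)" by (rule Tlip[OF that(1) h0D])
    hence "nrm (w - h0) \<le> k * nrm (w - h0)" by (simp only: Tw fixT)
    hence "nrm (w - h0) \<le> 0" using k1 nn[of "w - h0"]
      by (metis mult_le_cancel_right1 not_le)
    thus ?thesis using nn[of "w - h0"] zero_iff by simp
  qed
  have "hfix p nrm a lam = h0" unfolding hfix_def
  proof (rule the_equality)
    show "nrm (h0 - 1) \<le> nrm (ps_eval nrm a 1) / real p \<and> Pfam p lam h0 + ps_eval nrm a h0 = h0"
      using h0D fixT fix_iff by blast
    show "w = h0" if "nrm (w - 1) \<le> nrm (ps_eval nrm a 1) / real p \<and> Pfam p lam w + ps_eval nrm a w = w" for w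
      using uniq that by blast
  qed
  thus ?thesis using h0D by simp
qed

end


lemma Peq_gen: fixes mu :: "'a::comm_ring_1"
  shows "mu * w ^ p + (1 - mu) * w ^ (p + 1) = w ^ p * (w + mu * (1 - w))"
  by (simp add: algebra_simps)

context pset begin

lemma esc: assumes "nrm z \<le> rhat" "nrm z \<ge> 1" "nrm (z - 1) \<ge> 1"
  shows "nrm (Qconj p nrm a lam z) \<ge> real p * nrm z"
proof -
  define h where "h = hfix p nrm a lam"
  define d where "d = h - 1"
  define w where "w = z + h - 1"
  have d1: "nrm d < 1" using hfix_D s1 unfolding d_def h_def by linarith
  have wz: "nrm w = nrm z"
  proof -
    have "w = z + d" unfolding w_def d_def by simp
    thus ?thesis using strict2[of d z] d1 assms by simp
  qed
  have w1z: "nrm (w - 1) = nrm (z - 1)"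
  proof -
    have e: "w - 1 = (z - 1) + d" unfolding w_def d_def by simp
    show ?thesis unfolding e by (rule strict2) (use d1 assms in simp)
  qed
  have wr: "nrm w \<le> rhat" using wz assms by simp
  have wle: "nrm w \<le> nrm (w - 1)" using ultra[of "w - 1" 1] w1z assms by simp
  have Peq: "Pfam p lam w = w ^ p * (w + (lam / of_nat p) * (1 - w))"
    unfolding Pfam_def by (rule Peq_gen)
  have nl: "nrm ((lam / of_nat p) * (1 - w)) = real p * nrm (w - 1)"
    by (simp only: mult nrm_lp commute[of 1 w])
  have "nrm (w - 1) < real p * nrm (w - 1)" using p2 w1z assms by simp
  hence nb: "nrm (w + (lam / of_nat p) * (1 - w)) = real p * nrm (w - 1)"
    using strict[of w "(lam / of_nat p) * (1 - w)"] nl wle by simp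
  have wp: "nrm w \<le> nrm w ^ p" by (rule self_le_power) (use wz assms p2 in auto)
  have "real p * nrm w \<le> nrm w ^ p * (real p * nrm (w - 1))"
  proof -
    have "real p * nrm w \<le> real p * nrm w ^ p" using wp p2 by simp
    also have "\<dots> \<le> nrm w ^ p * (real p * nrm (w - 1))"
    proof -
      have "real p * 1 \<le> real p * nrm (w - 1)" using w1z assms by (intro mult_left_mono) auto
      hence "nrm w ^ p * real p \<le> nrm w ^ p * (real p * nrm (w - 1))"
        using nn[of w] by (intro mult_left_mono) auto
      thus ?thesis by (simp add: mult.commute)
    qed
    finally show ?thesis .
  qed
  hence Pb: "nrm (Pfam p lam w) \<ge> real p * nrm z"
    unfolding Peq mult power nb wz[symmetric] by simp
  have Qb: "nrm (Q w + (1 - h)) < 1"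
  proof -
    have "nrm (Q w) \<le> K" by (rule ps_eval_bound[OF conv]) (use r1 wr in auto)
    moreover have "nrm (1 - h) < 1" using d1 commute[of 1 h] unfolding d_def by simp
    ultimately show ?thesis using ultra[of "Q w" "1 - h"] K1 by linarith
  qed
  have "real p * nrm z \<ge> 2 * 1" using p2 assms by (intro mult_mono) auto
  hence "real p * nrm z \<ge> 1" by linarith
  hence fz: "nrm (Pfam p lam w + (Q w + (1 - h))) = nrm (Pfam p lam w)"
    using strict2[of "Q w + (1 - h)" "Pfam p lam w"] Qb Pb by linarith
  have "Qconj p nrm a lam z = Pfam p lam w + (Q w + (1 - h))"
    unfolding Qconj_def Let_def h_def[symmetric] w_def by simp
  thus ?thesis using fz Pb by simp
qed

lemma esc2: assumes "nrm z \<le> rhat" "nrm z \<ge> 1" "nrm (z - 1) \<ge> 1"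
  shows "nrm (Qconj p nrm a lam z) \<ge> 1 \<and> nrm (Qconj p nrm a lam z - 1) \<ge> 1"
proof -
  let ?y = "Qconj p nrm a lam z"
  have "real p * nrm z \<ge> 2 * 1" using p2 assms by (intro mult_mono) auto
  hence y2: "nrm ?y \<ge> 2" using esc[OF assms] by linarith
  have "nrm (?y + - 1) = nrm ?y" by (rule strict2) (use y2 in simp)
  thus ?thesis using y2 by simp
qed

lemma escape: assumes "\<forall>n. nrm ((Qconj p nrm a lam ^^ n) z) \<le> rhat"
  shows "nrm z < 1 \<or> nrm (z - 1) < 1"
proof (rule ccontr)
  assume "\<not> ?thesis"
  hence z: "nrm z \<ge> 1" "nrm (z - 1) \<ge> 1" by auto
  let ?f = "Qconj p nrm a lam"
  have I: "nrm ((?f ^^ n) z) \<ge> 1 \<and> nrm ((?f ^^ n) z - 1) \<ge> 1 \<and> nrm ((?f ^^ n) z) \<ge> real p ^ n" for n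
  proof (induction n)
    case 0 thus ?case using z by simp
  next
    case (Suc n)
    have r: "nrm ((?f ^^ n) z) \<le> rhat" using assms by blast
    have "nrm (?f ((?f ^^ n) z)) \<ge> real p * nrm ((?f ^^ n) z)" using esc[OF r] Suc by blast
    moreover have "real p * nrm ((?f ^^ n) z) \<ge> real p * real p ^ n" by (rule mult_left_mono) (use Suc in auto)
    ultimately show ?case using esc2[OF r] Suc by simp
  qed
  obtain n where "rhat < real p ^ n" using real_arch_pow[of "real p" rhat] p2 by auto
  thus False using I[of n] assms by (meson not_le order_trans)
qed

end


theorem proposition3p7:
  fixes nrm :: "'a::field_char_0 \<Rightarrow> real" and p :: nat and rhat :: real
    and a :: "nat \<Rightarrow> 'a" and lam :: 'a
  assumes "prime p"
    and "is_Cp p nrm"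
    and "rhat > 1" and "\<exists>c. c \<noteq> 0 \<and> nrm c = rhat"
    and "ps_conv_on nrm rhat a"
    and "ps_norm nrm rhat a < real p powr (- 1 / (real p - 1))"
    and "nrm (lam - 1) < 1"
  shows "filled_set nrm (Qconj p nrm a lam) rhat
           \<subseteq> {z. nrm z < 1} \<union> {z. nrm (z - 1) < 1}
         \<and> {z. nrm z < 1} \<inter> {z. nrm (z - 1) < 1} = {}"
proof -
  have p2: "p \<ge> 2" using assms(1) prime_ge_2_nat by blast
  interpret nonarch nrm
    using assms(2) unfolding is_Cp_def by unfold_locales blast+
  have "real p powr (- 1 / (real p - 1)) \<le> real p powr 0"
    by (rule powr_mono) (use p2 in auto)
  hence K1: "ps_norm nrm rhat a < 1" using assms(6) p2 by simp
  interpret pset nrm p rhat a lam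
    by unfold_locales (use p2 assms K1 in \<open>auto simp: is_Cp_def\<close>)
  show ?thesis
  proof
    show "filled_set nrm (Qconj p nrm a lam) rhat \<subseteq> {z. nrm z < 1} \<union> {z. nrm (z - 1) < 1}"
      unfolding filled_set_def using escape by blast
    show "{z. nrm z < 1} \<inter> {z. nrm (z - 1) < 1} = {}"
    proof (rule ccontr)
      assume "\<not> ?thesis"
      then obtain z where z: "nrm z < 1" "nrm (z - 1) < 1" by blast
      have "nrm (z - (z - 1)) \<le> max (nrm z) (nrm (z - 1))" by (rule ultra_diff)
      thus False using z by simp
    qed
  qed
qed


end
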